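(* Let $f$ and $g$ be two randomized functions over the same domain $\mathcal D\cup\{\perp\}$ such that $f(\perp)\equiv g(\perp)$, and let $\{P_i\}_{i\in[k]}$ be distributions over $\mathcal D\cup\{\perp\}$ such that for some $a\ge0$, $\mathbb E_{q\leftarrow P_i}[\mathrm{SD}(f(q),g(q))]\le a$ for every $i\in[k]$. Let $\mathsf A$ be a $k$-query oracle-aided algorithm that only makes queries in $\mathcal D$, and let $Q=(Q_1,\ldots,Q_k)$ be the random variable of the queries of $\mathsf A^f$ in a random execution, with $Q_i=\perp$ if $\mathsf A$ makes fewer than $i$ queries. Assume that $\Pr_{(q_1,\ldots,q_k)\leftarrow Q}[\exists i\in[k]: q_i\ne\perp\wedge Q_i(q_i)>\lambda\cdot P_i(q_i)]\le b$ for some $\lambda,b\ge0$. Then $\mathrm{SD}(\mathsf A^f,\mathsf A^g)\le b+ka\lambda$.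
   Context: $\mathrm{SD}$ denotes statistical distance; $\mathsf A^f$ denotes the output distribution of $\mathsf A$ with oracle access to $f$ (each query answered by a fresh independent sample of $f$ at the query point). For a distribution $D$, $D(q)$ is the probability it assigns to $q$; $Q_i(q)$ is the marginal probability that the $i$-th query equals $q$. *)

theory Defs
  imports "HOL-Probability.Probability"
begin

definition SD :: "'a pmf \<Rightarrow> 'a pmf \<Rightarrow> real" where
  "SD p q = (SUP A. \<bar>measure_pmf.prob p A - measure_pmf.prob q A\<bar>)"

text \<open>Deterministic oracle-aided strategies: either halt with an output, or
  make a query (an element of the domain D, type 'q) and continue depending on the
  answer. A randomized oracle-aided algorithm is a distribution over such strategies
  (its random coins are sampled up front).\<close>
datatype ('q, 'r, 'o) strat = Ret 'o | Query 'q "'r \<Rightarrow> ('q, 'r, 'o) strat"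

fun bounded :: "nat \<Rightarrow> ('q, 'r, 'o) strat \<Rightarrow> bool" where
  "bounded n (Ret x) = True"
| "bounded 0 (Query q c) = False"
| "bounded (Suc n) (Query q c) = (\<forall>r. bounded n (c r))"

text \<open>Execution with oracle access to a randomized function f on D \<union> {\<bottom>}
  (D = Some ` UNIV, \<bottom> = None); each query answered by a fresh independent sample.
  Returns the output together with the list of queries made.\<close>
primrec exec :: "('q option \<Rightarrow> 'r pmf) \<Rightarrow> ('q, 'r, 'o) strat \<Rightarrow> ('o \<times> 'q list) pmf" where
  "exec f (Ret x) = return_pmf (x, [])"
| "exec f (Query q c) =
     bind_pmf (f (Some q)) (\<lambda>r. map_pmf (\<lambda>(x, qs). (x, q # qs)) (exec f (c r)))"

definition is_k_query :: "nat \<Rightarrow> ('q, 'r, 'o) strat pmf \<Rightarrow> bool" where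
  "is_k_query k A = (\<forall>s \<in> set_pmf A. bounded k s)"

definition out :: "('q, 'r, 'o) strat pmf \<Rightarrow> ('q option \<Rightarrow> 'r pmf) \<Rightarrow> 'o pmf" where
  "out A f = bind_pmf A (\<lambda>s. map_pmf fst (exec f s))"

text \<open>Query tuple (Q_1,...,Q_k) of A^f, padded with \<bottom> = None; index i \<in> [k]
  corresponds to list position i - 1.\<close>
definition pad :: "nat \<Rightarrow> 'q list \<Rightarrow> 'q option list" where
  "pad k qs = map Some qs @ replicate (k - length qs) None"

definition queries :: "nat \<Rightarrow> ('q, 'r, 'o) strat pmf \<Rightarrow> ('q option \<Rightarrow> 'r pmf) \<Rightarrow> 'q option list pmf" where
  "queries k A f = bind_pmf A (\<lambda>s. map_pmf (\<lambda>(x, qs). pad k qs) (exec f s))"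

definition query_marg :: "nat \<Rightarrow> ('q, 'r, 'o) strat pmf \<Rightarrow> ('q option \<Rightarrow> 'r pmf) \<Rightarrow> nat \<Rightarrow> 'q option pmf" where
  "query_marg k A f i = map_pmf (\<lambda>v. v ! i) (queries k A f)"

end

theory Submission
  imports Defs
begin


lemma intb: fixes h :: "'a \<Rightarrow> real"
  assumes "\<And>x. \<bar>h x\<bar> \<le> B" shows "integrable (measure_pmf p) h"
  by (rule measure_pmf.integrable_const_bound[where B=B]) (auto simp: assms)

lemma nn_eq_int: fixes h :: "'a \<Rightarrow> real"
  assumes "\<And>x. 0 \<le> h x" "\<And>x. h x \<le> B"
  shows "(\<integral>\<^sup>+x. ennreal (h x) \<partial>measure_pmf p) = ennreal (measure_pmf.expectation p h)"
proof -
  have "\<And>x. \<bar>h x\<bar> \<le> B" using assms by (metis abs_of_nonneg)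
  then show ?thesis by (intro nn_integral_eq_integral intb[where B=B]) (auto simp: assms)
qed

lemma prob_bind: "measure_pmf.prob (bind_pmf M N) X = (\<integral>x. measure_pmf.prob (N x) X \<partial>measure_pmf M)"
proof -
  have "ennreal (measure_pmf.prob (bind_pmf M N) X) = emeasure (bind_pmf M N) X"
    by (simp add: measure_pmf.emeasure_eq_measure)
  also have "\<dots> = (\<integral>\<^sup>+x. emeasure (N x) X \<partial>M)"
    by (rule emeasure_bind_pmf)
  also have "\<dots> = (\<integral>\<^sup>+x. ennreal (measure_pmf.prob (N x) X) \<partial>M)"
    by (simp add: measure_pmf.emeasure_eq_measure)
  also have "\<dots> = ennreal (\<integral>x. measure_pmf.prob (N x) X \<partial>measure_pmf M)"
    by (rule nn_eq_int[where B=1]) auto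
  finally show ?thesis by (simp add: ennreal_inj integral_nonneg_AE)
qed

lemma prob01: "\<bar>measure_pmf.prob p A - measure_pmf.prob q B\<bar> \<le> 1"
  by (smt (verit) measure_pmf.prob_le_1 measure_nonneg)

lemma SD_bdd: "bdd_above (range (\<lambda>A. \<bar>measure_pmf.prob p A - measure_pmf.prob q A\<bar>))"
  by (rule bdd_aboveI[where M=1]) (auto simp: prob01)

lemma SD_ge: "\<bar>measure_pmf.prob p A - measure_pmf.prob q A\<bar> \<le> SD p q"
  unfolding SD_def by (rule cSUP_upper[OF _ SD_bdd]) auto

lemma SD_nonneg: "0 \<le> SD p q"
  using SD_ge[of p "{}" q] by simp

lemma SD_le1: "SD p q \<le> 1"
  unfolding SD_def
  by (rule cSUP_least) (auto simp: prob01)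

lemma SD_same: "SD p p = 0"
  unfolding SD_def by simp

lemma SD_sym: "SD p q = SD q p"
  unfolding SD_def by (simp add: abs_minus_commute)

lemma W: fixes u v :: "'a \<Rightarrow> real"
  assumes "\<And>x. 0 \<le> u x" "\<And>x. u x \<le> B" "\<And>x. 0 \<le> v x" "\<And>x. v x \<le> B"
    and "\<And>x. pmf p x * u x \<le> pmf q x * v x"
  shows "measure_pmf.expectation p u \<le> measure_pmf.expectation q v"
proof -
  have "ennreal (measure_pmf.expectation p u) = (\<integral>\<^sup>+x. ennreal (u x) \<partial>measure_pmf p)"
    by (rule nn_eq_int[symmetric]) (use assms in auto)
  also have "\<dots> = (\<integral>\<^sup>+x. ennreal (pmf p x) * ennreal (u x) \<partial>count_space UNIV)"
    by (rule nn_integral_measure_pmf)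
  also have "\<dots> \<le> (\<integral>\<^sup>+x. ennreal (pmf q x) * ennreal (v x) \<partial>count_space UNIV)"
    by (intro nn_integral_mono) (simp add: ennreal_mult''[symmetric] assms ennreal_leI)
  also have "\<dots> = (\<integral>\<^sup>+x. ennreal (v x) \<partial>measure_pmf q)"
    by (rule nn_integral_measure_pmf[symmetric])
  also have "\<dots> = ennreal (measure_pmf.expectation q v)"
    by (rule nn_eq_int) (use assms in auto)
  finally show ?thesis
    by (simp add: ennreal_le_iff integral_nonneg_AE assms)
qed

lemma Ws: fixes w :: "'a \<Rightarrow> real"
  assumes B: "\<And>x. \<bar>w x\<bar> \<le> B" and le: "\<And>x. pmf p x * w x \<le> pmf q x * w x"
  shows "measure_pmf.expectation p w \<le> measure_pmf.expectation q w"
proof -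
  define wp where "wp x = max (w x) 0" for x
  define wm where "wm x = max (- w x) 0" for x
  have w: "w = (\<lambda>x. wp x - wm x)" by (auto simp: wp_def wm_def fun_eq_iff)
  have bp: "\<And>x. \<bar>wp x\<bar> \<le> B" "\<And>x. \<bar>wm x\<bar> \<le> B"
    using B by (auto simp: wp_def wm_def abs_le_iff max_def) (smt (verit) B)+
  have i: "\<And>M. integrable (measure_pmf M) wp" "\<And>M. integrable (measure_pmf M) wm"
    using bp by (auto intro: intb)
  have 1: "measure_pmf.expectation p wp \<le> measure_pmf.expectation q wp"
  proof (rule W[where B=B])
    fix x show "pmf p x * wp x \<le> pmf q x * wp x"
      using le[of x] by (auto simp: wp_def max_def)
  qed (use bp in \<open>auto simp: wp_def abs_le_iff\<close>)
  have 2: "measure_pmf.expectation q wm \<le> measure_pmf.expectation p wm"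
  proof (rule W[where B=B])
    fix x show "pmf q x * wm x \<le> pmf p x * wm x"
      using le[of x] by (auto simp: wm_def max_def)
  qed (use bp in \<open>auto simp: wm_def abs_le_iff\<close>)
  show ?thesis unfolding w using 1 2
    by (simp add: Bochner_Integration.integral_diff[OF i(1) i(2)])
qed

lemma SD_exp1: fixes h :: "'a \<Rightarrow> real"
  assumes "\<And>x. 0 \<le> h x" "\<And>x. h x \<le> 1"
  shows "measure_pmf.expectation p h - measure_pmf.expectation q h \<le> SD p q"
proof -
  define S where "S = {x. pmf q x < pmf p x}"
  define w where "w x = h x - indicator S x" for x
  have ih: "\<And>M. integrable (measure_pmf M) h"
    by (rule intb[where B=1]) (use assms in \<open>auto simp: abs_le_iff intro: order_trans\<close>)
  have ii: "\<And>M. integrable (measure_pmf M) (indicator S :: 'a \<Rightarrow> real)"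
    by (rule intb[where B=1]) (auto simp: indicator_def)
  have "measure_pmf.expectation p w \<le> measure_pmf.expectation q w"
  proof (rule Ws[where B=1])
    fix x show "\<bar>w x\<bar> \<le> 1" using assms[of x] by (auto simp: w_def indicator_def)
    show "pmf p x * w x \<le> pmf q x * w x"
    proof (cases "x \<in> S")
      case True
      then have "h x - 1 \<le> 0" "pmf q x < pmf p x" using assms[of x] by (auto simp: S_def)
      then show ?thesis using True by (simp add: w_def mult_right_mono_neg)
    next
      case False
      then show ?thesis using assms[of x] by (simp add: w_def S_def mult_right_mono)
    qed
  qed
  then have "measure_pmf.expectation p h - measure_pmf.prob p S \<le> measure_pmf.expectation q h - measure_pmf.prob q S"
    unfolding w_def by (simp add: Bochner_Integration.integral_diff[OF ih ii])
  then have "measure_pmf.expectation p h - measure_pmf.expectation q h \<le> measure_pmf.prob p S - measure_pmf.prob q S"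
    by simp
  also have "\<dots> \<le> SD p q" using SD_ge[of p S q] by simp
  finally show ?thesis .
qed

lemma SD_exp: fixes h :: "'a \<Rightarrow> real"
  assumes "\<And>x. 0 \<le> h x" "\<And>x. h x \<le> 1"
  shows "\<bar>measure_pmf.expectation p h - measure_pmf.expectation q h\<bar> \<le> SD p q"
  using SD_exp1[of h p q, OF assms] SD_exp1[of h q p, OF assms] SD_sym[of p q] by linarith



fun Phi :: "(nat \<Rightarrow> 'q \<Rightarrow> bool) \<Rightarrow> ('q \<Rightarrow> real) \<Rightarrow> nat \<Rightarrow> 'q list \<Rightarrow> real" where
  "Phi B d i [] = 0"
| "Phi B d i (q # qs) = (if B i q then 1 else d q + Phi B d (Suc i) qs)"

lemma Phi_nonneg: "(\<And>q. 0 \<le> d q) \<Longrightarrow> 0 \<le> Phi B d i qs"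
  by (induction qs arbitrary: i) auto

lemma map_fst_exec: "map_pmf fst (exec f (Query q c)) = bind_pmf (f (Some q)) (\<lambda>r. map_pmf fst (exec f (c r)))"
  by (simp add: map_bind_pmf pmf.map_comp o_def case_prod_beta)

lemma key:
  fixes f g :: "'q option \<Rightarrow> 'r pmf" and s :: "('q, 'r, 'o) strat"
  assumes d0: "\<And>q. 0 \<le> d q" and dSD: "\<And>q. SD (f (Some q)) (g (Some q)) \<le> d q"
  shows "ennreal \<bar>measure_pmf.prob (map_pmf fst (exec f s)) X - measure_pmf.prob (map_pmf fst (exec g s)) X\<bar>
     \<le> (\<integral>\<^sup>+x. ennreal (Phi B d i (snd x)) \<partial>measure_pmf (exec f s))"
proof (induction s arbitrary: i)
  case (Ret x)
  then show ?case by simp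
next
  case (Query q c)
  define pf where "pf r = measure_pmf.prob (map_pmf fst (exec f (c r))) X" for r
  define pg where "pg r = measure_pmf.prob (map_pmf fst (exec g (c r))) X" for r
  define E where "E i r = (\<integral>\<^sup>+x. ennreal (Phi B d i (snd x)) \<partial>measure_pmf (exec f (c r)))" for i r
  have L: "\<bar>measure_pmf.prob (map_pmf fst (exec f (Query q c))) X - measure_pmf.prob (map_pmf fst (exec g (Query q c))) X\<bar>
     = \<bar>measure_pmf.expectation (f (Some q)) pf - measure_pmf.expectation (g (Some q)) pg\<bar>"
    unfolding map_fst_exec prob_bind pf_def pg_def ..
  have R: "(\<integral>\<^sup>+x. ennreal (Phi B d i (snd x)) \<partial>measure_pmf (exec f (Query q c)))
     = (\<integral>\<^sup>+r. (\<integral>\<^sup>+x. ennreal (Phi B d i (q # snd x)) \<partial>measure_pmf (exec f (c r))) \<partial>measure_pmf (f (Some q)))"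
    by (simp add: case_prod_beta)
  show ?case
  proof (cases "B i q")
    case True
    have "(\<integral>\<^sup>+x. ennreal (Phi B d i (snd x)) \<partial>measure_pmf (exec f (Query q c))) = 1"
      unfolding R using True by simp
    then show ?thesis using prob01 by (simp add: ennreal_le_1)
  next
    case False
    have pfb: "\<And>r. 0 \<le> pf r \<and> pf r \<le> 1" "\<And>r. 0 \<le> pg r \<and> pg r \<le> 1" by (auto simp: pf_def pg_def)
    have ipf: "integrable (measure_pmf (f (Some q))) pf" "integrable (measure_pmf (f (Some q))) pg"
      using pfb by (auto intro!: intb[where B=1] simp: abs_le_iff intro: order_trans)
    have a1: "\<bar>measure_pmf.expectation (f (Some q)) pf - measure_pmf.expectation (g (Some q)) pg\<bar>
       \<le> \<bar>measure_pmf.expectation (f (Some q)) pf - measure_pmf.expectation (f (Some q)) pg\<bar>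
        + \<bar>measure_pmf.expectation (f (Some q)) pg - measure_pmf.expectation (g (Some q)) pg\<bar>" by linarith
    have a2: "\<bar>measure_pmf.expectation (f (Some q)) pf - measure_pmf.expectation (f (Some q)) pg\<bar>
       \<le> measure_pmf.expectation (f (Some q)) (\<lambda>r. \<bar>pf r - pg r\<bar>)"
      by (simp add: Bochner_Integration.integral_diff[OF ipf, symmetric])
    have a3: "\<bar>measure_pmf.expectation (f (Some q)) pg - measure_pmf.expectation (g (Some q)) pg\<bar> \<le> d q"
      using SD_exp[of pg "f (Some q)" "g (Some q)"] pfb dSD[of q] by auto
    have "ennreal \<bar>measure_pmf.expectation (f (Some q)) pf - measure_pmf.expectation (g (Some q)) pg\<bar>
        \<le> ennreal (measure_pmf.expectation (f (Some q)) (\<lambda>r. \<bar>pf r - pg r\<bar>) + d q)"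
      by (rule ennreal_leI) (use a1 a2 a3 in linarith)
    then have 1: "ennreal \<bar>measure_pmf.expectation (f (Some q)) pf - measure_pmf.expectation (g (Some q)) pg\<bar>
        \<le> ennreal (measure_pmf.expectation (f (Some q)) (\<lambda>r. \<bar>pf r - pg r\<bar>)) + ennreal (d q)"
      by (simp add: ennreal_plus d0 integral_nonneg_AE)
    have "ennreal (measure_pmf.expectation (f (Some q)) (\<lambda>r. \<bar>pf r - pg r\<bar>))
        = (\<integral>\<^sup>+r. ennreal \<bar>pf r - pg r\<bar> \<partial>measure_pmf (f (Some q)))"
      by (rule nn_eq_int[where B=1, symmetric]) (auto simp: pf_def pg_def prob01)
    also have "\<dots> \<le> (\<integral>\<^sup>+r. E (Suc i) r \<partial>measure_pmf (f (Some q)))"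
      unfolding pf_def pg_def E_def by (intro nn_integral_mono Query.IH) simp
    finally have 2: "ennreal (measure_pmf.expectation (f (Some q)) (\<lambda>r. \<bar>pf r - pg r\<bar>)) \<le> (\<integral>\<^sup>+r. E (Suc i) r \<partial>measure_pmf (f (Some q)))" .
    have "(\<integral>\<^sup>+x. ennreal (Phi B d i (snd x)) \<partial>measure_pmf (exec f (Query q c)))
       = (\<integral>\<^sup>+r. ennreal (d q) + E (Suc i) r \<partial>measure_pmf (f (Some q)))"
      unfolding R E_def using False
      by (simp add: ennreal_plus d0 Phi_nonneg nn_integral_add)
    also have "\<dots> = ennreal (d q) + (\<integral>\<^sup>+r. E (Suc i) r \<partial>measure_pmf (f (Some q)))"
      by (simp add: nn_integral_add)
    finally show ?thesis unfolding L using 1 2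
      using order_trans[OF 1 add_right_mono[OF 2]] by (simp add: add.commute)
  qed
qed



lemma Phi_split:
  assumes d0: "\<And>q. 0 \<le> d q"
  shows "Phi B d i qs \<le> (if \<exists>j<length qs. B (i+j) (qs!j) then 1 else 0)
          + (\<Sum>j<length qs. if B (i+j) (qs!j) then 0 else d (qs!j))"
proof (induction qs arbitrary: i)
  case Nil
  then show ?case by simp
next
  case (Cons q qs)
  have nn: "0 \<le> (\<Sum>j<length (q#qs). if B (i+j) ((q#qs)!j) then 0 else d ((q#qs)!j))"
    by (intro sum_nonneg) (auto simp: d0)
  show ?case
  proof (cases "B i q")
    case True
    have "\<exists>j<length (q#qs). B (i+j) ((q#qs)!j)" using True by (intro exI[of _ 0]) simp
    then show ?thesis using True nn by simp
  next
    case False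
    have ex: "(\<exists>j<length (q#qs). B (i+j) ((q#qs)!j)) = (\<exists>j<length qs. B (Suc i+j) (qs!j))"
      using False by (auto simp: less_Suc_eq_0_disj)
    have sm: "(\<Sum>j<length (q#qs). if B (i+j) ((q#qs)!j) then 0 else d ((q#qs)!j))
        = d q + (\<Sum>j<length qs. if B (Suc i+j) (qs!j) then 0 else d (qs!j))"
      using False by (simp add: sum.lessThan_Suc_shift del: sum.lessThan_Suc, intro sum.cong) auto
    show ?thesis using Cons.IH[of "Suc i"] False unfolding ex sm by simp
  qed
qed

lemma pad_nth: "j < k \<Longrightarrow> length qs \<le> k \<Longrightarrow> pad k qs ! j = (if j < length qs then Some (qs!j) else None)"
  by (auto simp: pad_def nth_append)

lemma pad_len: "length qs \<le> k \<Longrightarrow> length (pad k qs) = k"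
  by (simp add: pad_def)



lemma len_exec: "bounded n s \<Longrightarrow> x \<in> set_pmf (exec f s) \<Longrightarrow> length (snd x) \<le> n"
proof (induction s arbitrary: n x)
  case (Ret y)
  then show ?case by simp
next
  case (Query q c)
  then obtain m where m: "n = Suc m" by (cases n) auto
  from Query.prems obtain r y qs where "(y, qs) \<in> set_pmf (exec f (c r))" "x = (y, q # qs)"
    by auto
  moreover have "bounded m (c r)" using Query.prems(1) m by simp
  ultimately show ?case using Query.IH[of "c r" m "(y, qs)"] m by simp
qed

theorem lemma2p17:
  fixes f g :: "'q option \<Rightarrow> 'r pmf"
    and P :: "nat \<Rightarrow> 'q option pmf"
    and A :: "('q, 'r, 'o) strat pmf"
    and k :: nat and a lam b :: real
  assumes bot: "f None = g None"
    and a_nonneg: "a \<ge> 0"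
    and hybrid: "\<And>i. i < k \<Longrightarrow> measure_pmf.expectation (P i) (\<lambda>q. SD (f q) (g q)) \<le> a"
    and kq: "is_k_query k A"
    and lam_nonneg: "lam \<ge> 0" and b_nonneg: "b \<ge> 0"
    and bad: "measure_pmf.prob (queries k A f)
               {v. \<exists>i<k. v ! i \<noteq> None \<and>
                    pmf (query_marg k A f i) (v ! i) > lam * pmf (P i) (v ! i)} \<le> b"
  shows "SD (out A f) (out A g) \<le> b + real k * a * lam"
proof -
  define D where "D x = SD (f x) (g x)" for x
  define Qm where "Qm i = query_marg k A f i" for i
  define Bd where "Bd i x \<longleftrightarrow> x \<noteq> None \<and> pmf (Qm i) x > lam * pmf (P i) x" for i x
  define B where "B i q \<longleftrightarrow> Bd i (Some q)" for i q
  define d where "d q = D (Some q)" for q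
  define t where "t i x = (if Bd i x then 0 else D x)" for i x
  define BS where "BS = {v. \<exists>i<k. v ! i \<noteq> None \<and> pmf (query_marg k A f i) (v ! i) > lam * pmf (P i) (v ! i)}"
  define Psi where "Psi v = indicator BS v + (\<Sum>i<k. ennreal (t i (v!i)))" for v :: "'q option list"
  have D0: "\<And>x. 0 \<le> D x" "\<And>x. D x \<le> 1" by (auto simp: D_def SD_nonneg SD_le1)
  have DN: "D None = 0" by (simp add: D_def bot SD_same)
  have t0: "\<And>i x. 0 \<le> t i x" by (simp add: t_def D0)
  have d0: "\<And>q. 0 \<le> d q" by (simp add: d_def D0)
  have PhiA: "ennreal (Phi B d 0 qs) \<le> Psi (pad k qs)" if len: "length qs \<le> k" for qs
  proof -
    have i1: "(if \<exists>j<length qs. B (0+j) (qs!j) then 1 else 0) \<le> (indicator BS (pad k qs) :: real)"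
    proof (cases "\<exists>j<length qs. B (0+j) (qs!j)")
      case True
      then obtain j where j: "j < length qs" "B j (qs!j)" by auto
      then have "pad k qs \<in> BS" using len pad_nth[of j k qs]
        by (auto simp: BS_def B_def Bd_def Qm_def intro!: exI[of _ j])
      then show ?thesis using True by simp
    qed (simp add: indicator_def)
    have s1: "(\<Sum>j<length qs. if B (0+j) (qs!j) then 0 else d (qs!j)) = (\<Sum>j<k. t j (pad k qs ! j))"
    proof (rule sum.mono_neutral_cong_right[symmetric])
      show "\<forall>j\<in>{..<k} - {..<length qs}. t j (pad k qs ! j) = 0"
        using pad_nth[of _ k qs] len by (auto simp: t_def DN)
      show "\<And>j. j \<in> {..<length qs} \<Longrightarrow> t j (pad k qs ! j) = (if B (0+j) (qs!j) then 0 else d (qs!j))"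
        using pad_nth[of _ k qs] len by (auto simp: t_def B_def d_def)
    qed (use len in auto)
    have "Phi B d 0 qs \<le> indicator BS (pad k qs) + (\<Sum>j<k. t j (pad k qs ! j))"
      using Phi_split[of d B 0 qs, OF d0] i1 s1 by linarith
    then have "ennreal (Phi B d 0 qs) \<le> ennreal (indicator BS (pad k qs) + (\<Sum>j<k. t j (pad k qs ! j)))"
      by (rule ennreal_leI)
    also have "\<dots> = Psi (pad k qs)"
      unfolding Psi_def by (simp add: ennreal_plus t0 sum_nonneg indicator_def)
    finally show ?thesis .
  qed
  have tb: "(\<integral>\<^sup>+x. ennreal (t i x) \<partial>measure_pmf (Qm i)) \<le> ennreal (lam * a)" if ik: "i < k" for i
  proof -
    have pw: "pmf (Qm i) x * t i x \<le> pmf (P i) x * (lam * D x)" for x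
    proof (cases "Bd i x")
      case True
      then show ?thesis by (simp add: t_def D0 lam_nonneg)
    next
      case False
      show ?thesis
      proof (cases "x = None")
        case True
        then show ?thesis by (simp add: t_def DN)
      next
        case xn: False
        then have "pmf (Qm i) x \<le> lam * pmf (P i) x" using False by (auto simp: Bd_def)
        then have "pmf (Qm i) x * D x \<le> (lam * pmf (P i) x) * D x"
          by (rule mult_right_mono) (simp add: D0)
        then show ?thesis using False by (simp add: t_def mult_ac)
      qed
    qed
    have "(\<integral>\<^sup>+x. ennreal (t i x) \<partial>measure_pmf (Qm i))
        = (\<integral>\<^sup>+x. ennreal (pmf (Qm i) x) * ennreal (t i x) \<partial>count_space UNIV)"
      by (rule nn_integral_measure_pmf)
    also have "\<dots> \<le> (\<integral>\<^sup>+x. ennreal (pmf (P i) x) * ennreal (lam * D x) \<partial>count_space UNIV)"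
      by (intro nn_integral_mono) (simp add: ennreal_mult''[symmetric] t0 D0 lam_nonneg pw ennreal_leI)
    also have "\<dots> = (\<integral>\<^sup>+x. ennreal (lam * D x) \<partial>measure_pmf (P i))"
      by (rule nn_integral_measure_pmf[symmetric])
    also have "\<dots> = ennreal (measure_pmf.expectation (P i) (\<lambda>x. lam * D x))"
      by (rule nn_eq_int[where B=lam]) (auto simp: D0 lam_nonneg mult_left_le)
    also have "\<dots> = ennreal (lam * measure_pmf.expectation (P i) D)" by simp
    also have "\<dots> \<le> ennreal (lam * a)"
    proof -
      have "D = (\<lambda>x. SD (f x) (g x))" by (simp add: D_def fun_eq_iff)
      then show ?thesis using hybrid[OF ik] by (intro ennreal_leI mult_left_mono) (auto simp: lam_nonneg)
    qed
    finally show ?thesis .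
  qed
  have main: "\<bar>measure_pmf.prob (out A f) X - measure_pmf.prob (out A g) X\<bar> \<le> b + real k * a * lam" for X
  proof -
    define Pf where "Pf s = measure_pmf.prob (map_pmf fst (exec f s)) X" for s
    define Pg where "Pg s = measure_pmf.prob (map_pmf fst (exec g s)) X" for s
    have ip: "integrable (measure_pmf A) Pf" "integrable (measure_pmf A) Pg"
      by (auto intro!: intb[where B=1] simp: Pf_def Pg_def prob01[where B="{}", simplified])
    have "\<bar>measure_pmf.prob (out A f) X - measure_pmf.prob (out A g) X\<bar>
        = \<bar>measure_pmf.expectation A Pf - measure_pmf.expectation A Pg\<bar>"
      unfolding out_def prob_bind Pf_def Pg_def ..
    also have "\<dots> \<le> measure_pmf.expectation A (\<lambda>s. \<bar>Pf s - Pg s\<bar>)"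
      by (simp add: Bochner_Integration.integral_diff[OF ip, symmetric])
    finally have c1: "\<bar>measure_pmf.prob (out A f) X - measure_pmf.prob (out A g) X\<bar>
        \<le> measure_pmf.expectation A (\<lambda>s. \<bar>Pf s - Pg s\<bar>)" .
    have "ennreal (measure_pmf.expectation A (\<lambda>s. \<bar>Pf s - Pg s\<bar>))
        = (\<integral>\<^sup>+s. ennreal \<bar>Pf s - Pg s\<bar> \<partial>measure_pmf A)"
      by (rule nn_eq_int[where B=1, symmetric]) (auto simp: Pf_def Pg_def prob01)
    also have "\<dots> \<le> (\<integral>\<^sup>+s. (\<integral>\<^sup>+x. ennreal (Phi B d 0 (snd x)) \<partial>measure_pmf (exec f s)) \<partial>measure_pmf A)"
      unfolding Pf_def Pg_def
      by (intro nn_integral_mono key) (auto simp: d0 d_def D_def SD_nonneg)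
    also have "\<dots> \<le> (\<integral>\<^sup>+s. (\<integral>\<^sup>+x. Psi (pad k (snd x)) \<partial>measure_pmf (exec f s)) \<partial>measure_pmf A)"
    proof (intro nn_integral_mono_AE AE_pmfI)
      fix s x assume s: "s \<in> set_pmf A" and x: "x \<in> set_pmf (exec f s)"
      have "bounded k s" using kq s by (simp add: is_k_query_def)
      then have "length (snd x) \<le> k" using len_exec x by blast
      then show "ennreal (Phi B d 0 (snd x)) \<le> Psi (pad k (snd x))" by (rule PhiA)
    qed
    also have "\<dots> = (\<integral>\<^sup>+v. Psi v \<partial>measure_pmf (queries k A f))"
      by (simp add: queries_def case_prod_beta)
    also have "\<dots> = (\<integral>\<^sup>+v. indicator BS v \<partial>measure_pmf (queries k A f))
         + (\<Sum>i<k. \<integral>\<^sup>+v. ennreal (t i (v!i)) \<partial>measure_pmf (queries k A f))"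
      unfolding Psi_def by (simp add: nn_integral_add nn_integral_sum)
    also have "\<dots> = emeasure (measure_pmf (queries k A f)) BS
         + (\<Sum>i<k. \<integral>\<^sup>+x. ennreal (t i x) \<partial>measure_pmf (Qm i))"
      by (simp add: Qm_def query_marg_def)
    also have "\<dots> \<le> ennreal b + (\<Sum>i<k. ennreal (lam * a))"
    proof (intro add_mono sum_mono tb)
      show "emeasure (measure_pmf (queries k A f)) BS \<le> ennreal b"
        using bad unfolding BS_def by (simp add: measure_pmf.emeasure_eq_measure ennreal_leI)
    qed simp
    also have "\<dots> = ennreal b + ennreal (real k * a * lam)"
      using a_nonneg lam_nonneg by (subst sum_ennreal) (auto simp: mult_ac)
    also have "\<dots> = ennreal (b + real k * a * lam)"
      using a_nonneg lam_nonneg b_nonneg by (intro ennreal_plus[symmetric]) auto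
    finally have "ennreal (measure_pmf.expectation A (\<lambda>s. \<bar>Pf s - Pg s\<bar>)) \<le> ennreal (b + real k * a * lam)" .
    then have "measure_pmf.expectation A (\<lambda>s. \<bar>Pf s - Pg s\<bar>) \<le> b + real k * a * lam"
      using ennreal_le_iff[of "b + real k * a * lam"] a_nonneg lam_nonneg b_nonneg by simp
    with c1 show ?thesis by linarith
  qed
  show ?thesis unfolding SD_def by (rule cSUP_least) (auto simp: main)
qed

end
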